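(* Let $N$ be a positive integer, $R\in\{0,1,\dots,N\}$, $B=N-R$, $n\in\{1,\dots,N\}$, and let $X$ have the hypergeometric distribution $$\Pr\{X=x\}=\frac{\binom Rx\binom B{n-x}}{\binom Nn}\ \text{ for }x\in\{0,\dots,n\}\text{ with }x\le R,\ n-x\le B,\qquad \Pr\{X=x\}=0\text{ for other }x\in\{0,\dots,n\}.$$ Let $\mu=nR/N$. Let $r,b$ be nonnegative integers with $r\le R$, $b\le B$, $r+b=n$. Define $\widehat R=\min\{N,\lfloor(N+1)\frac rn\rfloor\}$ and $\widehat B=N-\widehat R$. Then $$\Pr\{X\le r\}\le\frac{\binom Rr\binom Bb}{\binom{\widehat R}r\binom{\widehat B}b}\ \text{ for }r\le\mu,\qquad \Pr\{X\ge r\}\le\frac{\binom Rr\binom Bb}{\binom{\widehat R}r\binom{\widehat B}b}\ \text{ for }r\ge\mu.$$ *)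

theory Defs
  imports Complex_Main
begin

definition hyper_pmf :: "nat \<Rightarrow> nat \<Rightarrow> nat \<Rightarrow> nat \<Rightarrow> real" where
  "hyper_pmf N R n x =
     (if x \<le> n \<and> x \<le> R \<and> n - x \<le> N - R
      then real (R choose x) * real ((N - R) choose (n - x)) / real (N choose n)
      else 0)"

definition hyper_le :: "nat \<Rightarrow> nat \<Rightarrow> nat \<Rightarrow> nat \<Rightarrow> real" where
  "hyper_le N R n r = (\<Sum>x\<in>{0..n}. if x \<le> r then hyper_pmf N R n x else 0)"

definition hyper_ge :: "nat \<Rightarrow> nat \<Rightarrow> nat \<Rightarrow> nat \<Rightarrow> real" where
  "hyper_ge N R n r = (\<Sum>x\<in>{0..n}. if r \<le> x then hyper_pmf N R n x else 0)"

end

theory Submission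
  imports Defs
begin

lemma step_binom: "Suc y * (n choose Suc y) = (n - y) * (n choose y)"
  by (simp only: binomial_absorption binomial_absorb_comp)

lemma mlr: assumes "x \<le> y" "R' \<le> R"
  shows "(R choose x) * (R' choose y) \<le> (R choose y) * (R' choose x)"
  using assms(1)
proof (induction y rule: dec_induct)
  case base then show ?case by (simp add: mult.commute)
next
  case (step y)
  have "Suc y * ((R choose x) * (R' choose Suc y)) = ((R choose x) * (R' choose y)) * (R' - y)"
    using step_binom[of y R'] by (metis mult.assoc mult.left_commute mult.commute)
  also have "\<dots> \<le> ((R choose y) * (R' choose x)) * (R - y)"
    by (rule mult_mono) (use step.IH assms(2) in auto)
  also have "\<dots> = Suc y * ((R choose Suc y) * (R' choose x))"
    using step_binom[of y R] by (metis mult.assoc mult.left_commute mult.commute)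
  finally show ?case by (simp only: mult_le_cancel1)
qed

lemma tail_bound:
  fixes N R n r b Rh :: nat
  assumes "Rh \<le> N" "n \<le> N"
    and D: "(Rh choose r) * ((N-Rh) choose b) > 0"
    and H: "\<And>x. x \<le> n \<Longrightarrow> P x \<Longrightarrow> (R choose x)*((N-R) choose (n-x))*((Rh choose r)*((N-Rh) choose b))
            \<le> (R choose r)*((N-R) choose b)*((Rh choose x)*((N-Rh) choose (n-x)))"
  shows "(\<Sum>x\<in>{0..n}. if P x then hyper_pmf N R n x else 0)
     \<le> real (R choose r) * real ((N-R) choose b) / (real (Rh choose r) * real ((N-Rh) choose b))"
proof -
  define C where "C = real (N choose n)"
  define Dr where "Dr = real (Rh choose r) * real ((N-Rh) choose b)"
  define A where "A = real (R choose r) * real ((N-R) choose b)"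
  have C: "C > 0" unfolding C_def using assms(2) by simp
  have Dp: "Dr > 0" unfolding Dr_def using D by (simp add: of_nat_mult[symmetric] del: of_nat_mult)
  have A0: "A \<ge> 0" unfolding A_def by simp
  have trm: "(if P x then hyper_pmf N R n x else 0)
     \<le> A / Dr * (real (Rh choose x) * real ((N-Rh) choose (n-x))) / C" if x: "x \<in> {0..n}" for x
  proof (cases "P x")
    case True
    have pmf: "hyper_pmf N R n x \<le> real (R choose x) * real ((N-R) choose (n-x)) / C"
      unfolding hyper_pmf_def C_def by auto
    have "real ((R choose x)*((N-R) choose (n-x))*((Rh choose r)*((N-Rh) choose b)))
            \<le> real ((R choose r)*((N-R) choose b)*((Rh choose x)*((N-Rh) choose (n-x))))"
      using H[of x] x True by (simp only: of_nat_le_iff) auto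
    hence "real (R choose x) * real ((N-R) choose (n-x)) * Dr \<le> A * (real (Rh choose x) * real ((N-Rh) choose (n-x)))"
      unfolding A_def Dr_def by (simp add: mult_ac)
    hence "real (R choose x) * real ((N-R) choose (n-x)) \<le> A / Dr * (real (Rh choose x) * real ((N-Rh) choose (n-x)))"
      using Dp by (simp add: field_simps)
    hence "real (R choose x) * real ((N-R) choose (n-x)) / C \<le> A / Dr * (real (Rh choose x) * real ((N-Rh) choose (n-x))) / C"
      by (rule divide_right_mono) (use C in auto)
    with pmf True show ?thesis by simp
  next
    case False
    then show ?thesis using A0 Dp C by simp
  qed
  have "(\<Sum>x\<in>{0..n}. if P x then hyper_pmf N R n x else 0)
      \<le> (\<Sum>x\<in>{0..n}. A / Dr * (real (Rh choose x) * real ((N-Rh) choose (n-x))) / C)"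
    by (rule sum_mono) (rule trm)
  also have "\<dots> = A / Dr / C * real (\<Sum>x\<le>n. (Rh choose x) * ((N-Rh) choose (n-x)))"
    by (simp add: sum_divide_distrib sum_distrib_left atMost_atLeast0 mult_ac)
  also have "(\<Sum>x\<le>n. (Rh choose x) * ((N-Rh) choose (n-x))) = N choose n"
    using vandermonde[of Rh "N-Rh" n] assms(1) by simp
  also have "A / Dr / C * real (N choose n) = A / Dr"
    using C unfolding C_def by simp
  finally show ?thesis unfolding A_def Dr_def .
qed

theorem theorem7:
  fixes N R B n r b :: nat
  assumes "N > 0" and "R \<le> N" and "B = N - R" and "1 \<le> n" and "n \<le> N"
    and "r \<le> R" and "b \<le> B" and "r + b = n"
  defines "\<mu> \<equiv> real n * real R / real N"
    and "Rh \<equiv> min N (nat \<lfloor>real (N + 1) * real r / real n\<rfloor>)"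
  defines "Bh \<equiv> N - Rh"
  shows "(real r \<le> \<mu> \<longrightarrow> hyper_le N R n r \<le>
           real (R choose r) * real (B choose b) / (real (Rh choose r) * real (Bh choose b)))
       \<and> (real r \<ge> \<mu> \<longrightarrow> hyper_ge N R n r \<le>
           real (R choose r) * real (B choose b) / (real (Rh choose r) * real (Bh choose b)))"
proof -
  define t where "t = nat \<lfloor>real (N + 1) * real r / real n\<rfloor>"
  have Rh: "Rh = min N t" unfolding Rh_def t_def ..
  have np: "real n > 0" using assms(4) by simp
  have nn: "real (N + 1) * real r / real n \<ge> 0" by simp
  have t1: "real t \<le> real (N + 1) * real r / real n" unfolding t_def using nn by linarith
  have t2: "real (N + 1) * real r / real n < real t + 1" unfolding t_def using nn by linarith
  have t1n: "t * n \<le> (N + 1) * r"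
  proof -
    have "real t * real n \<le> real (N + 1) * real r" using t1 np by (simp add: field_simps)
    thus ?thesis by (simp only: of_nat_mult[symmetric] of_nat_le_iff)
  qed
  have t2n: "(N + 1) * r < (t + 1) * n"
  proof -
    have "real (N + 1) * real r < (real t + 1) * real n" using t2 np by (simp add: field_simps)
    thus ?thesis by (metis of_nat_1 of_nat_add of_nat_less_iff of_nat_mult)
  qed
  have rt: "r \<le> t"
  proof -
    have "r * n \<le> (N+1) * r" using mult_le_mono2[of n "N+1" r] assms(5) by (simp add: mult.commute)
    hence "r * n < (t+1) * n" using t2n by linarith
    hence "r < t + 1" by (simp only: mult_less_cancel2)
    thus ?thesis by simp
  qed
  have rRh: "r \<le> Rh" unfolding Rh using rt assms(6,2) by simp
  have bBh: "b \<le> Bh"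
  proof (cases "r = n")
    case True then show ?thesis using assms(8) by simp
  next
    case False
    hence rn: "r < n" using assms(8) by simp
    have "t \<le> N - n + r"
    proof (rule ccontr)
      assume "\<not> ?thesis"
      hence "N - n + r + 1 \<le> t" by simp
      hence "(N - n + r + 1) * n \<le> t * n" by (rule mult_le_mono1)
      hence "(N - n + r + 1) * n \<le> (N + 1) * r" using t1n by linarith
      moreover have "(N + 1) * r < (N - n + r + 1) * n"
      proof -
        define k where "k = N + 1 - n"
        have k1: "N + 1 = n + k" and k2: "N - n + r + 1 = k + r" and kp: "k > 0"
          using assms(5) unfolding k_def by auto
        have "r * k < n * k" using rn kp by simp
        hence "(n + k) * r < (k + r) * n" by (simp add: algebra_simps)
        thus ?thesis by (simp only: k1 k2)
      qed
      ultimately show False by simp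
    qed
    then show ?thesis unfolding Bh_def Rh using assms(8,5) by simp
  qed
  have RhN: "Rh \<le> N" unfolding Rh by simp
  have D: "(Rh choose r) * ((N-Rh) choose b) > 0"
    using rRh bBh unfolding Bh_def by simp
  have BhB: "Bh = N - Rh" by (simp add: Bh_def)
  show ?thesis
  proof (intro conjI impI)
    assume "real r \<le> \<mu>"
    hence "real r * real N \<le> real n * real R" unfolding \<mu>_def using assms(1) by (simp add: field_simps)
    hence rN: "r * N \<le> n * R" by (simp only: of_nat_mult[symmetric] of_nat_le_iff)
    have RhR: "Rh \<le> R"
    proof (cases "R = N")
      case True then show ?thesis using RhN by simp
    next
      case False
      hence RN: "R < N" using assms(2) by simp
      have "(t * N) * n = (t * n) * N" by (simp only: ac_simps)
      also have "\<dots> \<le> ((N + 1) * r) * N" using t1n by (rule mult_le_mono1)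
      also have "\<dots> = (N+1) * (r * N)" by (simp only: ac_simps)
      also have "\<dots> \<le> (N+1) * (n * R)" using rN by (rule mult_le_mono2)
      also have "\<dots> = ((N+1) * R) * n" by (simp only: ac_simps)
      finally have "(t * N) * n \<le> ((N+1) * R) * n" .
      hence "t * N \<le> (N+1) * R" using assms(4) by (simp only: mult_le_cancel2)
      also have "\<dots> < (R + 1) * N" using RN by simp
      finally have "t < R + 1" by (simp only: mult_less_cancel2)
      thus ?thesis unfolding Rh by simp
    qed
    show "hyper_le N R n r \<le>
           real (R choose r) * real (B choose b) / (real (Rh choose r) * real (Bh choose b))"
      unfolding hyper_le_def assms(3) BhB
    proof (rule tail_bound[OF RhN assms(5) D])
      fix x assume x: "x \<le> n" "x \<le> r"
      have 1: "(R choose x) * (Rh choose r) \<le> (R choose r) * (Rh choose x)"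
        using mlr[OF x(2) RhR] .
      have 2: "((N-Rh) choose b) * ((N-R) choose (n-x)) \<le> ((N-Rh) choose (n-x)) * ((N-R) choose b)"
        using mlr[of b "n-x" "N-R" "N-Rh"] x assms(8) RhR by simp
      from mult_mono[OF 1 2] show "(R choose x)*((N-R) choose (n-x))*((Rh choose r)*((N-Rh) choose b))
            \<le> (R choose r)*((N-R) choose b)*((Rh choose x)*((N-Rh) choose (n-x)))"
        by (simp add: mult_ac)
    qed
  next
    assume "real r \<ge> \<mu>"
    hence "real r * real N \<ge> real n * real R" unfolding \<mu>_def using assms(1) by (simp add: field_simps)
    hence rN: "r * N \<ge> n * R" by (simp only: of_nat_mult[symmetric] of_nat_le_iff)
    have RRh: "R \<le> Rh"
    proof -
      have "((N+1) * R) * n = (N + 1) * (n * R)" by (simp only: ac_simps)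
      also have "\<dots> \<le> (N+1) * (r * N)" using rN by (rule mult_le_mono2)
      also have "\<dots> = ((N + 1) * r) * N" by (simp only: ac_simps)
      also have "\<dots> < ((t + 1) * n) * N" using t2n assms(1) by (simp only: mult_less_cancel2)
      also have "\<dots> = ((t+1) * N) * n" by (simp only: ac_simps)
      finally have "((N+1) * R) * n < ((t+1) * N) * n" .
      hence "(N+1) * R < (t+1) * N" by (simp only: mult_less_cancel2)
      hence "R * N < (t+1) * N" by (metis le_less_trans mult.commute mult_le_mono1 le_add1 add.commute)
      hence "R < t + 1" by (simp only: mult_less_cancel2)
      thus ?thesis unfolding Rh using assms(2) by simp
    qed
    show "hyper_ge N R n r \<le>
           real (R choose r) * real (B choose b) / (real (Rh choose r) * real (Bh choose b))"
      unfolding hyper_ge_def assms(3) BhB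
    proof (rule tail_bound[OF RhN assms(5) D])
      fix x assume x: "x \<le> n" "r \<le> x"
      have 1: "(Rh choose r) * (R choose x) \<le> (Rh choose x) * (R choose r)"
        using mlr[OF x(2) RRh] .
      have 2: "((N-R) choose (n-x)) * ((N-Rh) choose b) \<le> ((N-R) choose b) * ((N-Rh) choose (n-x))"
        using mlr[of "n-x" b "N-Rh" "N-R"] x assms(8) RRh by simp
      from mult_mono[OF 1 2] show "(R choose x)*((N-R) choose (n-x))*((Rh choose r)*((N-Rh) choose b))
            \<le> (R choose r)*((N-R) choose b)*((Rh choose x)*((N-Rh) choose (n-x)))"
        by (simp add: mult_ac)
    qed
  qed
qed

end
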